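(* Let $\Psi_{\rm data},\Psi_{\rm prior}:\mathbb{R}^D\to\mathbb{R}$ be given, and for $\tau\in[0,1]$ let $\pi_\tau(\theta)\propto \exp(-\tau\Psi_{\rm data}(\theta))\,\pi_{\rm prior}(\theta)$ with $\pi_{\rm prior}\propto\exp(-\Psi_{\rm prior})$, and let $\Sigma_\tau$ be the covariance matrix of $\pi_\tau$. Let $V_\tau:\mathbb{R}^D\to\mathbb{R}$ satisfy the elliptic PDE $$\nabla_\theta\cdot(\pi_\tau\Sigma_\tau\nabla_\theta V_\tau) = -(\Psi_{\rm data}-\pi_\tau[\Psi_{\rm data}])\,\pi_\tau .$$ Then the choice $F_\tau(\theta)=\Sigma_\tau\nabla_\theta V_\tau(\theta)$ leads to an affine-invariant homotopy formulation $\frac{\rm d}{{\rm d}\tau}\theta_\tau=-F_\tau(\theta_\tau)$, $\theta_0\sim\pi_{\rm prior}$. More precisely, for any invertible $A\in\mathbb{R}^{D\times D}$ and $b\in\mathbb{R}^D$, with $\theta=A\overline{\theta}+b$, $\overline{\Psi}_{\rm data}(\overline\theta)=\Psi_{\rm data}(A\overline\theta+b)$, $\overline{\Psi}_{\rm prior}(\overline\theta)=\Psi_{\rm prior}(A\overline\theta+b)$, $\overline{\pi}_\tau(\overline\theta)=\pi_\tau(A\overline\theta+b)\,|A|$ and $\overline\Sigma_\tau$ the covariance matrix of $\overline\pi_\tau$, the transformed vector field is $\overline F_\tau(\overline\theta)=\overline\Sigma_\tau\nabla_{\overline\theta}\overline V_\tau(\overline\theta)$, where $\overline V_\tau$ satisfies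 $$\nabla_{\overline\theta}\cdot(\overline\pi_\tau\overline\Sigma_\tau\nabla_{\overline\theta}\overline V_\tau) = -(\overline\Psi_{\rm data}-\overline\pi_\tau[\overline\Psi_{\rm data}])\,\overline\pi_\tau ,$$ and $F_\tau(A\overline\theta+b)=A\,\overline F_\tau(\overline\theta)$ for all $\overline\theta\in\mathbb{R}^D$.
   Context: $\pi_\tau[f]$ denotes the expectation of $f$ under the PDF $\pi_\tau$. A homotopy formulation $\frac{\rm d}{{\rm d}\tau}\theta_\tau=-F_\tau(\theta_\tau)$ (with $F_\tau$ any vector field satisfying $\nabla_\theta\cdot(\pi_\tau F_\tau)=-(\Psi_{\rm data}-\pi_\tau[\Psi_{\rm data}])\pi_\tau$) is called affine-invariant if, for every invertible affine transformation $\theta=A\overline\theta+b$, the vector field $F_\tau$ of the original problem and the vector field $\overline F_\tau$ of the transformed problem (defined by $\overline\Psi_{\rm data},\overline\Psi_{\rm prior}$ as in the claim) satisfy $F_\tau(A\overline\theta+b)=A\overline F_\tau(\overline\theta)$; this implies $\theta_\tau=A\overline\theta_\tau+b$ for all $\tau>0$ if it holds at $\tau=0$. *)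

theory Defs
  imports "HOL-Analysis.Analysis"
begin

text \<open>Points of R^D are vectors real^'n (D = CARD('n)); matrices are real^'n^'n.\<close>

text \<open>Gradient of a scalar field: components are the directional (Frechet) derivatives
  along the coordinate axes.\<close>
definition grad :: "(real^'n \<Rightarrow> real) \<Rightarrow> real^'n \<Rightarrow> real^'n" where
  "grad V x = (\<chi> i. frechet_derivative V (at x) (axis i 1))"

text \<open>Divergence of a vector field.\<close>
definition divergence :: "(real^'n \<Rightarrow> real^'n) \<Rightarrow> real^'n \<Rightarrow> real" where
  "divergence G x = (\<Sum>i\<in>UNIV. (frechet_derivative G (at x) (axis i 1)) $ i)"

text \<open>The tempered posterior density
  pi_tau(theta) = exp(-tau Psi_data(theta)) exp(-Psi_prior(theta)) / Z_tau.\<close>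
definition post :: "(real^'n \<Rightarrow> real) \<Rightarrow> (real^'n \<Rightarrow> real) \<Rightarrow> real \<Rightarrow> real^'n \<Rightarrow> real" where
  "post Psi_data Psi_prior \<tau> \<theta> =
     exp (- \<tau> * Psi_data \<theta> - Psi_prior \<theta>) /
     (\<integral>x. exp (- \<tau> * Psi_data x - Psi_prior x) \<partial>lborel)"

text \<open>Expectation p[f] of f under a density p (w.r.t. Lebesgue measure).\<close>
definition expect :: "(real^'n \<Rightarrow> real) \<Rightarrow> (real^'n \<Rightarrow> real) \<Rightarrow> real" where
  "expect p f = (\<integral>x. p x * f x \<partial>lborel)"

definition mean :: "(real^'n \<Rightarrow> real) \<Rightarrow> real^'n" where
  "mean p = (\<chi> i. expect p (\<lambda>x. x $ i))"

text \<open>Covariance matrix of the density p.\<close>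
definition cov :: "(real^'n \<Rightarrow> real) \<Rightarrow> real^'n^'n" where
  "cov p = (\<chi> i j. expect p (\<lambda>x. (x $ i - mean p $ i) * (x $ j - mean p $ j)))"

text \<open>The vector field F(theta) = Sigma grad V(theta) attached to density p and potential V.\<close>
definition Fvec :: "(real^'n \<Rightarrow> real) \<Rightarrow> (real^'n \<Rightarrow> real) \<Rightarrow> real^'n \<Rightarrow> real^'n" where
  "Fvec p V \<theta> = cov p *v grad V \<theta>"

text \<open>V is a classical solution of the elliptic PDE
  div(p Sigma_p grad V) = -(Psi - p[Psi]) p  on all of R^D.\<close>
definition solves_pde :: "(real^'n \<Rightarrow> real) \<Rightarrow> (real^'n \<Rightarrow> real) \<Rightarrow> (real^'n \<Rightarrow> real) \<Rightarrow> bool" where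
  "solves_pde Psi p V \<longleftrightarrow>
     (\<forall>\<theta>. V differentiable (at \<theta>)) \<and>
     (\<forall>\<theta>. (\<lambda>x. p x *\<^sub>R Fvec p V x) differentiable (at \<theta>)) \<and>
     (\<forall>\<theta>. divergence (\<lambda>x. p x *\<^sub>R Fvec p V x) \<theta> = - (Psi \<theta> - expect p Psi) * p \<theta>)"

end

theory Submission
  imports Defs
begin

typedef 'a wo = "UNIV :: 'a set" by auto

instance wo :: (finite) finite
proof
  have "(UNIV :: 'a wo set) = Abs_wo ` UNIV"
    by (metis Abs_wo_cases surj_def)
  moreover have "finite (range (Abs_wo :: 'a \<Rightarrow> 'a wo))" by simp
  ultimately show "finite (UNIV :: 'a wo set)" by simp
qed

instantiation wo :: (finite) linorder
begin
definition less_eq_wo :: "'a wo \<Rightarrow> 'a wo \<Rightarrow> bool" where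
  "less_eq_wo x y \<longleftrightarrow> to_nat (Rep_wo x) \<le> to_nat (Rep_wo y)"
definition less_wo :: "'a wo \<Rightarrow> 'a wo \<Rightarrow> bool" where
  "less_wo x y \<longleftrightarrow> to_nat (Rep_wo x) < to_nat (Rep_wo y)"
instance
proof
  have inj: "to_nat (Rep_wo x) = to_nat (Rep_wo y) \<Longrightarrow> x = y" for x y :: "'a wo"
    by (metis Rep_wo_inject to_nat_split)
  fix x y z :: "'a wo"
  show "(x < y) = (x \<le> y \<and> \<not> y \<le> x)" by (auto simp: less_eq_wo_def less_wo_def)
  show "x \<le> x" by (simp add: less_eq_wo_def)
  show "x \<le> y \<Longrightarrow> y \<le> z \<Longrightarrow> x \<le> z" by (simp add: less_eq_wo_def)
  show "x \<le> y \<Longrightarrow> y \<le> x \<Longrightarrow> x = y" using inj by (simp add: less_eq_wo_def)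
  show "x \<le> y \<or> y \<le> x" by (auto simp add: less_eq_wo_def)
qed
end

instance wo :: (finite) wellorder
proof
  fix P :: "'a wo \<Rightarrow> bool" and a
  assume H: "\<And>x. (\<And>y. y < x \<Longrightarrow> P y) \<Longrightarrow> P x"
  have "wf (inv_image {(m, n). m < n} (\<lambda>x::'a wo. to_nat (Rep_wo x)))"
    by (intro wf_inv_image) (simp add: wf_less)
  then show "P a"
    by (induct a rule: wf_induct_rule) (auto intro: H simp: less_wo_def)
qed

lemma det_reindex:
  fixes M :: "'a::comm_ring_1^'n::finite^'n" and r :: "'m::finite \<Rightarrow> 'n"
  assumes "bij r"
  shows "det (\<chi> i j. M$(r i)$(r j)) = det M"
proof -
  define ri where "ri = inv r"
  have rri[simp]: "r (ri x) = x" for x using assms unfolding ri_def by (simp add: bij_is_surj surj_f_inv_f)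
  have rir[simp]: "ri (r x) = x" for x using assms unfolding ri_def by (simp add: bij_is_inj inv_f_f)
  define c where "c p = (\<lambda>x. r (p (ri x)))" for p :: "'m \<Rightarrow> 'm"
  define d where "d q = (\<lambda>x. ri (q (r x)))" for q :: "'n \<Rightarrow> 'n"
  have sgn: "sign (c p) = sign p" if p: "p permutes (UNIV::'m set)" for p
  proof -
    interpret permutes_bij_finite p "UNIV::'m set" "UNIV::'n set" r ri "c p"
      by unfold_locales (use p assms in \<open>auto simp: c_def intro!: eq_reflection\<close>)
    show ?thesis using sign_p' by simp
  qed
  have cperm: "c p permutes UNIV" if p: "p permutes (UNIV::'m set)" for p
  proof -
    interpret permutes_bij_finite p "UNIV::'m set" "UNIV::'n set" r ri "c p"
      by unfold_locales (use p assms in \<open>auto simp: c_def intro!: eq_reflection\<close>)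
    show ?thesis using permutes_p' by simp
  qed
  have dperm: "d q permutes UNIV" if q: "q permutes (UNIV::'n set)" for q
  proof -
    have b: "bij ri" using assms unfolding ri_def by (simp add: bij_imp_bij_inv)
    have rii: "r = inv ri" using assms unfolding ri_def by (simp add: inv_inv_eq)
    interpret permutes_bij_finite q "UNIV::'n set" "UNIV::'m set" ri r "d q"
      by unfold_locales (use q b in \<open>auto simp: d_def intro!: eq_reflection\<close>)
    show ?thesis using permutes_p' by simp
  qed
  have bij: "bij_betw c {p. p permutes (UNIV::'m set)} {q. q permutes (UNIV::'n set)}"
    using cperm dperm by (intro bij_betw_byWitness[where f'=d]) (auto simp: c_def d_def)
  have pr: "(\<Prod>i\<in>UNIV. M$(r i)$(r (p i))) = (\<Prod>k\<in>UNIV. M$k$(c p k))" for p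
  proof -
    have "(\<Prod>k\<in>UNIV. M$k$(c p k)) = (\<Prod>i\<in>UNIV. M$(r i)$(c p (r i)))"
      using prod.reindex_bij_betw[of r UNIV UNIV "\<lambda>k. M$k$(c p k)"] assms by (simp add: bij_betw_def)
    then show ?thesis by (simp add: c_def)
  qed
  have "det M = (\<Sum>p\<in>{p. p permutes (UNIV::'m set)}. of_int (sign (c p)) * (\<Prod>k\<in>UNIV. M$k$(c p k)))"
    unfolding det_def using sum.reindex_bij_betw[OF bij, of "\<lambda>q. of_int (sign q) * (\<Prod>k\<in>UNIV. M$k$(q k))"]
    by simp
  also have "\<dots> = det (\<chi> i j. M$(r i)$(r j))"
    unfolding det_def by (intro sum.cong refl) (simp add: sgn pr)
  finally show ?thesis by simp
qed

definition phi :: "real^'n::finite \<Rightarrow> real^('n wo)" where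
  "phi x = (\<chi> j. x $ Rep_wo j)"
definition psi :: "real^('n::finite wo) \<Rightarrow> real^'n" where
  "psi y = (\<chi> i. y $ Abs_wo i)"

lemma phi_psi[simp]: "phi (psi y) = y" by (simp add: phi_def psi_def Rep_wo_inverse vec_eq_iff)
lemma psi_phi[simp]: "psi (phi x) = x" by (simp add: phi_def psi_def Abs_wo_inverse vec_eq_iff)

lemma linear_phi: "linear phi"
  by (intro linearI) (simp_all add: phi_def vec_eq_iff)
lemma linear_psi: "linear psi"
  by (intro linearI) (simp_all add: psi_def vec_eq_iff)

lemma phi_meas[measurable]: "phi \<in> borel_measurable borel"
  using linear_phi by (intro borel_measurable_continuous_onI linear_continuous_on) (simp add: linear_linear)
lemma psi_meas[measurable]: "psi \<in> borel_measurable borel"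
  using linear_psi by (intro borel_measurable_continuous_onI linear_continuous_on) (simp add: linear_linear)

lemma prod_Basis_cart: "(\<Prod>b\<in>Basis. (x::real^'n::finite) \<bullet> b) = (\<Prod>i\<in>UNIV. x$i)"
  by (simp add: Basis_vec_def cart_eq_inner_axis axis_eq_axis prod.UNION_disjoint)

lemma bij_Rep_wo: "bij Rep_wo"
  by (metis Rep_wo_inject Rep_wo_inverse Abs_wo_inverse UNIV_I bijI injI surjI)
lemma bij_Abs_wo: "bij (Abs_wo :: 'a \<Rightarrow> 'a wo)"
  by (metis Rep_wo_inverse Abs_wo_inverse UNIV_I bijI injI surjI)

lemma distr_phi: "distr lborel borel (phi :: real^'n::finite \<Rightarrow> _) = lborel"
proof (rule lborel_eqI[symmetric])
  fix l u :: "real^('n wo)"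
  assume le: "\<And>b. b \<in> Basis \<Longrightarrow> l \<bullet> b \<le> u \<bullet> b"
  have pre: "(phi -` box l u :: (real^'n) set) = box (psi l) (psi u)"
  proof (rule set_eqI)
    fix x :: "real^'n"
    have "(\<forall>j. l$j < x$(Rep_wo j) \<and> x$(Rep_wo j) < u$j) \<longleftrightarrow>
          (\<forall>i. l$(Abs_wo i) < x$i \<and> x$i < u$(Abs_wo i))"
      by (metis Abs_wo_inverse Rep_wo_inverse UNIV_I)
    then show "x \<in> phi -` box l u \<longleftrightarrow> x \<in> box (psi l) (psi u)"
      by (simp add: mem_box_cart phi_def psi_def)
  qed
  have le1: "l $ j \<le> u $ j" for j
    using le[of "axis j 1"] by (auto simp: Basis_vec_def inner_axis)
  have le2: "\<And>b. b \<in> Basis \<Longrightarrow> psi l \<bullet> b \<le> psi u \<bullet> b"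
    using le1 by (auto simp: Basis_vec_def inner_axis psi_def)
  have "(\<Prod>i\<in>UNIV. (psi u - psi l)$i) = (\<Prod>i\<in>(UNIV::'n set). (u - l) $ Abs_wo i)"
    by (simp add: psi_def)
  also have "\<dots> = (\<Prod>j\<in>UNIV. (u - l)$j)"
    using prod.reindex_bij_betw[of Abs_wo UNIV UNIV "\<lambda>j. (u - l)$j"] bij_Abs_wo
    by simp
  finally have eq: "(\<Prod>i\<in>UNIV. (psi u - psi l)$i) = (\<Prod>j\<in>UNIV. (u - l)$j)" .
  have "emeasure (distr lborel borel phi) (box l u) = emeasure lborel (phi -` box l u)"
    by (simp add: emeasure_distr)
  also have "\<dots> = emeasure lborel (box (psi l) (psi u))" by (simp only: pre)
  also have "\<dots> = ennreal (\<Prod>b\<in>Basis. (psi u - psi l) \<bullet> b)"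
    using le2 by (simp add: emeasure_lborel_box_eq)
  also have "\<dots> = ennreal (\<Prod>b\<in>Basis. (u - l) \<bullet> b)"
    by (simp only: prod_Basis_cart eq)
  finally show "emeasure (distr lborel borel phi) (box l u) = (\<Prod>b\<in>Basis. (u - l) \<bullet> b)" .
qed simp

lemma emeasure_psi_image:
  assumes "Y \<in> sets borel"
  shows "emeasure lborel (psi ` Y) = emeasure lborel (Y :: (real^('n::finite wo)) set)"
proof -
  have "psi ` Y = phi -` Y"
  proof (rule set_eqI)
    fix x show "x \<in> psi ` Y \<longleftrightarrow> x \<in> phi -` Y"
      by (metis image_iff phi_psi psi_phi vimage_eq)
  qed
  moreover have "emeasure lborel Y = emeasure (distr lborel borel (phi :: real^'n \<Rightarrow> _)) Y"
    by (simp add: distr_phi)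
  ultimately show ?thesis using assms by (simp add: emeasure_distr)
qed

lemma emeasure_phi_image:
  assumes "X \<in> sets borel"
  shows "emeasure lborel (phi ` X) = emeasure lborel (X :: (real^'n::finite) set)"
proof -
  have "phi ` X = psi -` X"
  proof (rule set_eqI)
    fix x show "x \<in> phi ` X \<longleftrightarrow> x \<in> psi -` X"
      by (metis image_iff phi_psi psi_phi vimage_eq)
  qed
  moreover have "psi -` X \<in> sets borel" using measurable_sets[OF psi_meas assms] by simp
  moreover have "phi -` (psi -` X) = X" by auto
  ultimately show ?thesis
    using emeasure_distr[of phi lborel borel "psi -` X"] by (simp add: distr_phi)
qed

lemma emeasure_linear_box_wo:
  fixes g :: "real^'m::{finite,wellorder} \<Rightarrow> real^'m::_"
  assumes "linear g" "bij g"
  shows "emeasure lborel (g ` box l u) = ennreal \<bar>det (matrix g)\<bar> * emeasure lborel (box l u)"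
proof -
  have op: "open (g ` box l u)" using assms open_bijective_linear_image_eq by blast
  have m: "measure lebesgue (g ` box l u) = \<bar>det (matrix g)\<bar> * measure lebesgue (box l u)"
    using measure_linear_image[OF assms(1) lmeasurable_box] .
  have lm: "g ` box l u \<in> lmeasurable" using measurable_linear_image[OF assms(1) lmeasurable_box] .
  have "emeasure lborel (g ` box l u) = emeasure lebesgue (g ` box l u)"
    using op by simp
  also have "\<dots> = ennreal (measure lebesgue (g ` box l u))"
    using lm by (simp add: emeasure_eq_measure2)
  also have "\<dots> = ennreal \<bar>det (matrix g)\<bar> * ennreal (measure lebesgue (box l u))"
    by (simp add: m ennreal_mult)
  also have "ennreal (measure lebesgue (box l u)) = emeasure lborel (box l u)"
    by (simp add: emeasure_eq_measure2)
  finally show ?thesis .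
qed

lemma psi_axis: "psi (axis j 1 :: real^('n::finite wo)) = axis (Rep_wo j) 1"
  unfolding psi_def axis_def vec_eq_iff
  by (auto simp: Abs_wo_inverse Rep_wo_inverse)

lemma phi_box: "phi ` box l u = box (phi l) (phi (u::real^'n::finite))"
proof (rule set_eqI)
  fix y :: "real^('n wo)"
  have "y \<in> phi ` box l u \<longleftrightarrow> psi y \<in> box l u"
    by (metis image_iff phi_psi psi_phi)
  also have "\<dots> \<longleftrightarrow> y \<in> box (phi l) (phi u)"
  proof -
    have "(\<forall>i. l$i < y$(Abs_wo i) \<and> y$(Abs_wo i) < u$i) \<longleftrightarrow>
          (\<forall>j. l$(Rep_wo j) < y$j \<and> y$j < u$(Rep_wo j))"
      by (metis Abs_wo_inverse Rep_wo_inverse UNIV_I)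
    then show ?thesis by (simp add: mem_box_cart phi_def psi_def)
  qed
  finally show "y \<in> phi ` box l u \<longleftrightarrow> y \<in> box (phi l) (phi u)" .
qed

lemma emeasure_linear_box:
  fixes L :: "real^'n::finite \<Rightarrow> real^'n"
  assumes lin: "linear L" and bij: "bij L"
  shows "emeasure lborel (L ` box l u) = ennreal \<bar>det (matrix L)\<bar> * emeasure lborel (box l u)"
proof -
  define g :: "real^('n wo) \<Rightarrow> real^('n wo)" where "g = phi \<circ> L \<circ> psi"
  have lg: "linear g" unfolding g_def
    by (intro linear_compose linear_phi linear_psi lin)
  have bphi: "bij (phi :: real^'n \<Rightarrow> _)"
    by (metis bij_betw_byWitness phi_psi psi_phi subset_UNIV)
  have bpsi: "bij (psi :: _ \<Rightarrow> real^'n)"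
    by (metis bij_betw_byWitness phi_psi psi_phi subset_UNIV)
  have bg: "bij g" unfolding g_def using bphi bpsi bij by (intro bij_comp)
  have Lg: "L ` X = psi ` (g ` (phi ` X))" for X
    by (simp add: g_def image_comp comp_def)
  have mg: "matrix g = (\<chi> i j. matrix L $ Rep_wo i $ Rep_wo j)"
    by (simp add: matrix_def g_def psi_axis phi_def vec_eq_iff)
  have dg: "det (matrix g) = det (matrix L)"
    unfolding mg by (rule det_reindex[OF bij_Rep_wo])
  have op: "open (g ` box (phi l) (phi u))" using lg bg open_bijective_linear_image_eq by blast
  have "emeasure lborel (L ` box l u) = emeasure lborel (g ` box (phi l) (phi u))"
    unfolding Lg phi_box using op by (intro emeasure_psi_image) simp
  also have "\<dots> = ennreal \<bar>det (matrix g)\<bar> * emeasure lborel (box (phi l) (phi u))"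
    by (rule emeasure_linear_box_wo[OF lg bg])
  also have "emeasure lborel (box (phi l) (phi u)) = emeasure lborel (box l u)"
    unfolding phi_box[symmetric] by (intro emeasure_phi_image) simp
  finally show ?thesis by (simp add: dg)
qed

lemma minv:
  fixes A :: "real^'n::finite^'n"
  assumes "invertible A"
  shows "A ** matrix_inv A = mat 1" "matrix_inv A ** A = mat 1"
  using someI_ex[OF assms[unfolded invertible_def]] unfolding matrix_inv_def by auto

lemma affine_meas[measurable]: "(\<lambda>x. (A::real^'n::finite^'n) *v x + b) \<in> borel_measurable borel"
  by (intro borel_measurable_continuous_onI linear_continuous_on continuous_intros)
     (simp add: linear_linear[symmetric])

lemma lborel_affine_matrix:
  fixes A :: "real^'n::finite^'n"
  assumes inv: "invertible A"
  shows "lborel = density (distr lborel borel (\<lambda>x. A *v x + b)) (\<lambda>_. ennreal \<bar>det A\<bar>)"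
proof (rule lborel_eqI)
  fix l u :: "real^'n"
  assume le: "\<And>c. c \<in> Basis \<Longrightarrow> l \<bullet> c \<le> u \<bullet> c"
  define Ai where "Ai = matrix_inv A"
  have AAi: "A ** Ai = mat 1" and AiA: "Ai ** A = mat 1" using minv[OF inv] by (auto simp: Ai_def)
  have pre: "(\<lambda>x. A *v x + b) -` box l u = (\<lambda>y. Ai *v y) ` box (l - b) (u - b)"
  proof (rule set_eqI)
    fix x :: "real^'n"
    have 1: "A *v x + b \<in> box l u \<longleftrightarrow> A *v x \<in> box (l - b) (u - b)"
      by (simp add: mem_box_cart) (smt (verit))
    have 2: "A *v x \<in> box (l - b) (u - b) \<longleftrightarrow> x \<in> (\<lambda>y. Ai *v y) ` box (l - b) (u - b)"
    proof
      assume "A *v x \<in> box (l - b) (u - b)"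
      moreover have "x = Ai *v (A *v x)" by (simp add: matrix_vector_mul_assoc AiA)
      ultimately show "x \<in> (\<lambda>y. Ai *v y) ` box (l - b) (u - b)" by blast
    next
      assume "x \<in> (\<lambda>y. Ai *v y) ` box (l - b) (u - b)"
      then obtain y where "y \<in> box (l - b) (u - b)" "x = Ai *v y" by blast
      moreover have "A *v (Ai *v y) = y" by (simp add: matrix_vector_mul_assoc AAi)
      ultimately show "A *v x \<in> box (l - b) (u - b)" by simp
    qed
    show "x \<in> (\<lambda>x. A *v x + b) -` box l u \<longleftrightarrow> x \<in> (\<lambda>y. Ai *v y) ` box (l - b) (u - b)"
      using 1 2 by simp
  qed
  have binv: "bij (\<lambda>y. Ai *v y)"
    by (rule bij_betw_byWitness[where f'="\<lambda>y. A *v y"])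
       (auto simp: matrix_vector_mul_assoc AAi AiA)
  have dd: "\<bar>det A\<bar> * \<bar>det Ai\<bar> = 1"
    using det_mul[of A Ai] AAi by (simp flip: abs_mult)
  have le': "\<And>c. c \<in> Basis \<Longrightarrow> (l - b) \<bullet> c \<le> (u - b) \<bullet> c"
    using le by (simp add: inner_diff_left)
  have "emeasure (density (distr lborel borel (\<lambda>x. A *v x + b)) (\<lambda>_. ennreal \<bar>det A\<bar>)) (box l u)
      = ennreal \<bar>det A\<bar> * emeasure lborel ((\<lambda>x. A *v x + b) -` box l u)"
    by (simp add: emeasure_density_const emeasure_distr)
  also have "\<dots> = ennreal \<bar>det A\<bar> * (ennreal \<bar>det Ai\<bar> * emeasure lborel (box (l - b) (u - b)))"
    unfolding pre using emeasure_linear_box[of "\<lambda>y. Ai *v y", OF _ binv] by simp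
  also have "\<dots> = emeasure lborel (box (l - b) (u - b))"
    by (simp add: mult.assoc[symmetric] ennreal_mult'[symmetric] dd)
  also have "\<dots> = ennreal (\<Prod>c\<in>Basis. (u - l) \<bullet> c)"
    using le' by (simp add: emeasure_lborel_box_eq)
  finally show "emeasure (density (distr lborel borel (\<lambda>x. A *v x + b)) (\<lambda>_. ennreal \<bar>det A\<bar>)) (box l u)
      = (\<Prod>c\<in>Basis. (u - l) \<bullet> c)" .
qed simp

lemma cv_integral:
  fixes A :: "real^'n::finite^'n" and f :: "real^'n \<Rightarrow> real"
  assumes inv: "invertible A" and f: "integrable lborel f"
  shows "integrable lborel (\<lambda>x. f (A *v x + b))"
    and "(\<integral>x. \<bar>det A\<bar> * f (A *v x + b) \<partial>lborel) = (\<integral>x. f x \<partial>lborel)"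
proof -
  have fm[measurable]: "f \<in> borel_measurable borel"
    using borel_measurable_integrable[OF f] by simp
  have dA: "det A \<noteq> 0" using inv by (simp add: invertible_det_nz)
  let ?D = "density (distr lborel borel (\<lambda>x. A *v x + b)) (\<lambda>_. ennreal \<bar>det A\<bar>)"
  have "integrable ?D f" using f lborel_affine_matrix[OF inv, of b] by simp
  then have "integrable (distr lborel borel (\<lambda>x. A *v x + b)) (\<lambda>x. \<bar>det A\<bar> *\<^sub>R f x)"
    by (subst (asm) integrable_density) auto
  then have "integrable lborel (\<lambda>x. \<bar>det A\<bar> *\<^sub>R f (A *v x + b))"
    by (subst (asm) integrable_distr_eq) auto
  then show "integrable lborel (\<lambda>x. f (A *v x + b))" using dA by simp
  have "(\<integral>x. f x \<partial>lborel) = integral\<^sup>L ?D f"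
    using lborel_affine_matrix[OF inv, of b] by simp
  also have "\<dots> = integral\<^sup>L (distr lborel borel (\<lambda>x. A *v x + b)) (\<lambda>x. \<bar>det A\<bar> *\<^sub>R f x)"
    by (subst integral_density) auto
  also have "\<dots> = (\<integral>x. \<bar>det A\<bar> * f (A *v x + b) \<partial>lborel)"
    by (subst integral_distr) auto
  finally show "(\<integral>x. \<bar>det A\<bar> * f (A *v x + b) \<partial>lborel) = (\<integral>x. f x \<partial>lborel)" by simp
qed

lemma cvE:
  fixes A :: "real^'n::finite^'n"
  assumes inv: "invertible A" and g: "integrable lborel g"
    and q: "\<And>x. q x = \<bar>det A\<bar> * g (A *v x + b)"
  shows "(\<integral>x. q x \<partial>lborel) = (\<integral>x. g x \<partial>lborel)"
  using cv_integral(2)[OF inv g, of b] q by simp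

lemma mv_comp: "(M *v v) $ i = (\<Sum>k\<in>UNIV. M$i$k * v$k)"
  by (simp add: matrix_vector_mult_def)

lemma mean_transform:
  fixes A :: "real^'n::finite^'n" and p :: "real^'n \<Rightarrow> real"
  assumes inv: "invertible A" and ip: "integrable lborel p" and p1: "(\<integral>y. p y \<partial>lborel) = 1"
    and ik: "\<And>k. integrable lborel (\<lambda>y. p y * y$k)"
  shows "mean (\<lambda>x. p (A *v x + b) * \<bar>det A\<bar>) = matrix_inv A *v (mean p - b)"
proof -
  define Ai where "Ai = matrix_inv A"
  have AiA: "Ai ** A = mat 1" using minv[OF inv] by (auto simp: Ai_def)
  have x_eq: "x = Ai *v (A *v x + b - b)" for x by (simp add: matrix_vector_mul_assoc AiA)
  show ?thesis
  proof (subst vec_eq_iff, intro allI)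
    fix i
    define g where "g y = (\<Sum>k\<in>UNIV. Ai$i$k * (p y * y$k)) - (Ai *v b)$i * p y" for y
    have gint: "integrable lborel g" unfolding g_def using ik ip by auto
    have geq: "g y = p y * (Ai *v (y - b))$i" for y
      unfolding g_def mv_comp by (simp add: sum_distrib_left sum_subtractf algebra_simps)
    have "mean (\<lambda>x. p (A *v x + b) * \<bar>det A\<bar>) $ i = (\<integral>x. p (A *v x + b) * \<bar>det A\<bar> * x$i \<partial>lborel)"
      by (simp add: mean_def expect_def)
    also have "\<dots> = (\<integral>x. g x \<partial>lborel)"
    proof (rule cvE[OF inv gint])
      fix x show "p (A *v x + b) * \<bar>det A\<bar> * x $ i = \<bar>det A\<bar> * g (A *v x + b)"
        using arg_cong[OF x_eq[of x], of "\<lambda>v. v$i"] by (simp add: geq)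
    qed
    also have "\<dots> = (\<Sum>k\<in>UNIV. Ai$i$k * mean p $ k) - (Ai *v b)$i"
      unfolding g_def using ik ip p1
      by (simp add: integral_diff integrable_sum integral_sum mean_def expect_def)
    also have "\<dots> = (Ai *v (mean p - b)) $ i"
      by (simp add: mv_comp algebra_simps sum_subtractf)
    finally show "mean (\<lambda>x. p (A *v x + b) * \<bar>det A\<bar>) $ i = (matrix_inv A *v (mean p - b)) $ i"
      by (simp add: Ai_def)
  qed
qed

lemma cov_transform:
  fixes A :: "real^'n::finite^'n" and p :: "real^'n \<Rightarrow> real"
  assumes inv: "invertible A" and ip: "integrable lborel p" and p1: "(\<integral>y. p y \<partial>lborel) = 1"
    and ik: "\<And>k. integrable lborel (\<lambda>y. p y * y$k)"
    and ikl: "\<And>k l. integrable lborel (\<lambda>y. p y * (y$k * y$l))"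
  shows "cov (\<lambda>x. p (A *v x + b) * \<bar>det A\<bar>) = matrix_inv A ** cov p ** transpose (matrix_inv A)"
proof -
  define Ai where "Ai = matrix_inv A"
  define m where "m = mean p"
  have AiA: "Ai ** A = mat 1" using minv[OF inv] by (auto simp: Ai_def)
  have mb: "mean (\<lambda>x. p (A *v x + b) * \<bar>det A\<bar>) = Ai *v (m - b)"
    using mean_transform[OF inv ip p1 ik] by (simp add: Ai_def m_def)
  have x_eq: "x - Ai *v (m - b) = Ai *v (A *v x + b - m)" for x
  proof -
    have "x = Ai *v (A *v x + b - b)" by (simp add: matrix_vector_mul_assoc AiA)
    then have "x - Ai *v (m - b) = Ai *v (A *v x + b - b) - Ai *v (m - b)" by simp
    also have "\<dots> = Ai *v (A *v x + b - m)" by (simp only: matrix_vector_mult_diff_distrib[symmetric]) (simp add: algebra_simps)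
    finally show ?thesis .
  qed
  define h where "h k l y = p y * ((y$k - m$k) * (y$l - m$l))" for k l y
  have hint: "integrable lborel (h k l)" for k l
  proof -
    have "h k l = (\<lambda>y. p y * (y$k * y$l) - m$l * (p y * y$k) - m$k * (p y * y$l) + m$k * m$l * p y)"
      by (rule ext) (simp add: h_def algebra_simps)
    then show ?thesis using ik ikl ip by simp
  qed
  have ch: "cov p $ k $ l = (\<integral>y. h k l y \<partial>lborel)" for k l
    by (simp add: cov_def expect_def h_def m_def)
  show ?thesis
  proof (subst vec_eq_iff, intro allI, subst vec_eq_iff, intro allI)
    fix i j
    define g where "g y = (\<Sum>k\<in>UNIV. \<Sum>l\<in>UNIV. Ai$i$k * Ai$j$l * h k l y)" for y
    have gint: "integrable lborel g" unfolding g_def using hint by auto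
    have geq: "g y = p y * ((Ai *v (y - m))$i * (Ai *v (y - m))$j)" for y
    proof -
      have "p y * ((Ai *v (y - m))$i * (Ai *v (y - m))$j)
          = (\<Sum>k\<in>UNIV. \<Sum>l\<in>UNIV. p y * ((Ai$i$k * (y - m)$k) * (Ai$j$l * (y - m)$l)))"
        by (simp only: mv_comp sum_product) (simp only: sum_distrib_left)
      also have "\<dots> = g y"
        unfolding g_def by (intro sum.cong refl) (simp add: h_def mult_ac)
      finally show ?thesis by simp
    qed
    have "cov (\<lambda>x. p (A *v x + b) * \<bar>det A\<bar>) $ i $ j
        = (\<integral>x. p (A *v x + b) * \<bar>det A\<bar> * ((x$i - (Ai *v (m - b))$i) * (x$j - (Ai *v (m - b))$j)) \<partial>lborel)"
      by (simp add: cov_def expect_def mb)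
    also have "\<dots> = (\<integral>x. g x \<partial>lborel)"
    proof (rule cvE[OF inv gint])
      fix x
      have "x$i - (Ai *v (m - b))$i = (Ai *v (A *v x + b - m))$i"
           "x$j - (Ai *v (m - b))$j = (Ai *v (A *v x + b - m))$j"
        using arg_cong[OF x_eq[of x], of "\<lambda>v. v$i"] arg_cong[OF x_eq[of x], of "\<lambda>v. v$j"] by simp_all
      then show "p (A *v x + b) * \<bar>det A\<bar> * ((x$i - (Ai *v (m - b))$i) * (x$j - (Ai *v (m - b))$j))
                 = \<bar>det A\<bar> * g (A *v x + b)"
        by (simp add: geq)
    qed
    also have "\<dots> = (\<Sum>k\<in>UNIV. \<Sum>l\<in>UNIV. Ai$i$k * Ai$j$l * cov p $ k $ l)"
      unfolding g_def using hint by (simp add: integral_sum integrable_sum ch)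
    also have "\<dots> = (Ai ** cov p ** transpose Ai) $ i $ j"
      by (simp add: matrix_matrix_mult_def transpose_def sum_distrib_right sum_distrib_left algebra_simps)
         (subst sum.swap, simp)
    finally show "cov (\<lambda>x. p (A *v x + b) * \<bar>det A\<bar>) $ i $ j = (matrix_inv A ** cov p ** transpose (matrix_inv A)) $ i $ j"
      by (simp add: Ai_def)
  qed
qed

lemma affine_has_derivative:
  "((\<lambda>x. (A::real^'n::finite^'n) *v x + b) has_derivative (\<lambda>h. A *v h)) (at x)"
proof -
  have "bounded_linear (\<lambda>h. A *v h)" by (simp add: linear_linear[symmetric])
  then have "((\<lambda>x. A *v x) has_derivative (\<lambda>h. A *v h)) (at x)"
    by (rule bounded_linear_imp_has_derivative)
  then show ?thesis by (rule has_derivative_add_const)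
qed

lemma lin_expand:
  fixes D :: "real^'n::finite \<Rightarrow> 'b::real_vector"
  assumes "linear D"
  shows "D v = (\<Sum>k\<in>UNIV. v$k *\<^sub>R D (axis k 1))"
proof -
  have "v = (\<Sum>k\<in>UNIV. v$k *\<^sub>R axis k 1)"
    using basis_expansion[of v] by (simp add: scalar_mult_eq_scaleR)
  then have "D v = D (\<Sum>k\<in>UNIV. v$k *\<^sub>R axis k 1)" by simp
  also have "\<dots> = (\<Sum>k\<in>UNIV. v$k *\<^sub>R D (axis k 1))"
    using assms by (simp add: linear_sum linear_cmul)
  finally show ?thesis .
qed

lemma diag_axis: "((X::real^'n::finite^'n) *v axis i 1) $ i = X$i$i"
  by (simp add: mv_comp axis_def if_distrib sum.delta cong: if_cong)

lemma mv_axis: "((X::real^'n::finite^'m) *v axis i 1) $ k = X$k$i"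
  by (simp add: mv_comp axis_def if_distrib sum.delta cong: if_cong)

lemma grad_transform:
  fixes V :: "real^'n::finite \<Rightarrow> real" and A :: "real^'n^'n"
  assumes "V differentiable (at (A *v x + b))"
  shows "grad (\<lambda>x. V (A *v x + b)) x = transpose A *v grad V (A *v x + b)"
proof -
  define D where "D = frechet_derivative V (at (A *v x + b))"
  have dV: "(V has_derivative D) (at (A *v x + b))"
    using assms unfolding D_def frechet_derivative_works .
  have lD: "linear D" using dV has_derivative_linear by blast
  have "((\<lambda>x. V (A *v x + b)) has_derivative (\<lambda>h. D (A *v h))) (at x)"
    using has_derivative_compose[OF affine_has_derivative dV] .
  then have fd: "frechet_derivative (\<lambda>x. V (A *v x + b)) (at x) = (\<lambda>h. D (A *v h))"
    by (rule frechet_derivative_at[symmetric])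
  show ?thesis
  proof (subst vec_eq_iff, intro allI)
    fix i
    have "grad (\<lambda>x. V (A *v x + b)) x $ i = D (A *v axis i 1)"
      by (simp add: grad_def fd)
    also have "\<dots> = (\<Sum>k\<in>UNIV. (A *v axis i 1)$k *\<^sub>R D (axis k 1))"
      by (rule lin_expand[OF lD])
    also have "\<dots> = (\<Sum>k\<in>UNIV. (A *v axis i 1)$k * D (axis k 1))"
      by simp
    also have "\<dots> = (\<Sum>k\<in>UNIV. transpose A $ i $ k * grad V (A *v x + b) $ k)"
      by (simp add: mv_axis transpose_def grad_def D_def)
    also have "\<dots> = (transpose A *v grad V (A *v x + b)) $ i"
      by (simp only: mv_comp)
    finally show "grad (\<lambda>x. V (A *v x + b)) x $ i = (transpose A *v grad V (A *v x + b)) $ i" .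
  qed
qed

lemma div_transform:
  fixes G :: "real^'n::finite \<Rightarrow> real^'n" and A M :: "real^'n^'n"
  assumes dG: "G differentiable (at (A *v x + b))" and AM: "A ** M = mat 1"
  shows "(\<lambda>x. c *\<^sub>R (M *v G (A *v x + b))) differentiable (at x)"
    and "divergence (\<lambda>x. c *\<^sub>R (M *v G (A *v x + b))) x = c * divergence G (A *v x + b)"
proof -
  define D where "D = frechet_derivative G (at (A *v x + b))"
  have dV: "(G has_derivative D) (at (A *v x + b))"
    using dG unfolding D_def frechet_derivative_works .
  have lD: "linear D" using dV has_derivative_linear by blast
  have "(\<lambda>y. c *\<^sub>R (M *v y)) = (\<lambda>y. (c *\<^sub>R M) *v y)"
    by (simp add: scaleR_matrix_vector_assoc)
  moreover have "bounded_linear (\<lambda>y. (c *\<^sub>R M) *v y)" by (simp add: linear_linear[symmetric])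
  ultimately have bl: "bounded_linear (\<lambda>y. c *\<^sub>R (M *v y))" by simp
  have "((\<lambda>x. G (A *v x + b)) has_derivative (\<lambda>h. D (A *v h))) (at x)"
    using has_derivative_compose[OF affine_has_derivative dV] .
  then have hd: "((\<lambda>x. c *\<^sub>R (M *v G (A *v x + b))) has_derivative (\<lambda>h. c *\<^sub>R (M *v D (A *v h)))) (at x)"
    by (rule bounded_linear.has_derivative[OF bl])
  then show "(\<lambda>x. c *\<^sub>R (M *v G (A *v x + b))) differentiable (at x)"
    unfolding differentiable_def by blast
  have fd: "frechet_derivative (\<lambda>x. c *\<^sub>R (M *v G (A *v x + b))) (at x) = (\<lambda>h. c *\<^sub>R (M *v D (A *v h)))"
    using hd by (rule frechet_derivative_at[symmetric])
  define N where "N = matrix D"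
  have DN: "D h = N *v h" for h using matrix_vector_mul(2)[OF lD] unfolding N_def by metis
  have dG': "divergence G (A *v x + b) = trace N"
    by (simp add: divergence_def D_def[symmetric] DN diag_axis trace_def)
  have "divergence (\<lambda>x. c *\<^sub>R (M *v G (A *v x + b))) x = c * trace (M ** N ** A)"
    by (simp add: divergence_def fd DN matrix_vector_mul_assoc diag_axis trace_def sum_distrib_left matrix_mul_assoc)
  also have "trace (M ** N ** A) = trace (A ** (M ** N))"
    by (rule trace_mul_sym)
  also have "\<dots> = trace N" by (simp add: matrix_mul_assoc AM)
  finally show "divergence (\<lambda>x. c *\<^sub>R (M *v G (A *v x + b))) x = c * divergence G (A *v x + b)"
    by (simp add: dG')
qed

lemma diff_affine:
  fixes V :: "real^'n::finite \<Rightarrow> 'b::real_normed_vector" and A :: "real^'n^'n"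
  assumes "V differentiable (at (A *v x + b))"
  shows "(\<lambda>x. V (A *v x + b)) differentiable (at x)"
proof -
  obtain D where "(V has_derivative D) (at (A *v x + b))" using assms unfolding differentiable_def by blast
  from has_derivative_compose[OF affine_has_derivative this] show ?thesis
    unfolding differentiable_def by blast
qed

theorem mainTheorem1:
  fixes Psi_data Psi_prior V :: "real^'n \<Rightarrow> real"
    and \<tau> :: real and A :: "real^'n^'n" and b :: "real^'n"
  assumes "0 \<le> \<tau>" and "\<tau> \<le> 1"
    and "integrable lborel (\<lambda>\<theta>. exp (- \<tau> * Psi_data \<theta> - Psi_prior \<theta>))"
    and "\<forall>i. integrable lborel (\<lambda>\<theta>. post Psi_data Psi_prior \<tau> \<theta> * \<theta> $ i)"
    and "\<forall>i j. integrable lborel (\<lambda>\<theta>. post Psi_data Psi_prior \<tau> \<theta> * (\<theta> $ i * \<theta> $ j))"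
    and "integrable lborel (\<lambda>\<theta>. post Psi_data Psi_prior \<tau> \<theta> * Psi_data \<theta>)"
    and "solves_pde Psi_data (post Psi_data Psi_prior \<tau>) V"
    and "invertible A"
  shows "solves_pde (\<lambda>\<theta>b. Psi_data (A *v \<theta>b + b))
            (\<lambda>\<theta>b. post Psi_data Psi_prior \<tau> (A *v \<theta>b + b) * \<bar>det A\<bar>)
            (\<lambda>\<theta>b. V (A *v \<theta>b + b))
       \<and> (\<forall>\<theta>b. Fvec (post Psi_data Psi_prior \<tau>) V (A *v \<theta>b + b) =
               A *v Fvec (\<lambda>x. post Psi_data Psi_prior \<tau> (A *v x + b) * \<bar>det A\<bar>)
                         (\<lambda>x. V (A *v x + b)) \<theta>b)"
proof -
  note inv = assms(8)
  define p where "p = post Psi_data Psi_prior \<tau>"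
  define e where "e \<theta> = exp (- \<tau> * Psi_data \<theta> - Psi_prior \<theta>)" for \<theta>
  define Z where "Z = (\<integral>x. e x \<partial>lborel)"
  have ie: "integrable lborel e" using assms(3) unfolding e_def[abs_def] by simp
  have pe: "p = (\<lambda>\<theta>. e \<theta> / Z)" by (rule ext) (simp add: p_def post_def e_def Z_def)
  have Z0: "Z \<noteq> 0"
  proof
    assume "Z = 0"
    then have i0: "integral\<^sup>L lborel e = 0" by (simp add: Z_def)
    have nn: "AE x in lborel. 0 \<le> e x" by (simp add: e_def)
    have "AE x in lborel. e x = 0"
      using integral_nonneg_eq_0_iff_AE[OF ie nn] i0 by simp
    then have "AE x in (lborel :: (real^'n) measure). False" by (simp add: e_def)
    then have "ae_filter (lborel :: (real^'n) measure) = bot" using trivial_limit_def by blast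
    then show False by (simp add: ae_filter_eq_bot_iff)
  qed
  have ip: "integrable lborel p" using ie by (simp add: pe)
  have p1: "(\<integral>y. p y \<partial>lborel) = 1" using Z0 by (simp add: pe Z_def)
  have ik: "\<And>k. integrable lborel (\<lambda>y. p y * y$k)" using assms(4) by (simp add: p_def)
  have ikl: "\<And>k l. integrable lborel (\<lambda>y. p y * (y$k * y$l))" using assms(5) by (simp add: p_def)
  have iP: "integrable lborel (\<lambda>y. p y * Psi_data y)" using assms(6) by (simp add: p_def)
  have sp: "\<forall>\<theta>. V differentiable (at \<theta>)"
    "\<forall>\<theta>. (\<lambda>x. p x *\<^sub>R Fvec p V x) differentiable (at \<theta>)"
    "\<forall>\<theta>. divergence (\<lambda>x. p x *\<^sub>R Fvec p V x) \<theta> = - (Psi_data \<theta> - expect p Psi_data) * p \<theta>"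
    using assms(7) by (simp_all add: solves_pde_def p_def)
  define Ai where "Ai = matrix_inv A"
  have AAi: "A ** Ai = mat 1" and AiA: "Ai ** A = mat 1" using minv[OF inv] by (auto simp: Ai_def)
  define pb where "pb x = p (A *v x + b) * \<bar>det A\<bar>" for x
  define Vb where "Vb x = V (A *v x + b)" for x
  have cb: "cov pb = Ai ** cov p ** transpose Ai"
    unfolding pb_def Ai_def by (rule cov_transform[OF inv ip p1 ik ikl])
  have gb: "grad Vb x = transpose A *v grad V (A *v x + b)" for x
    unfolding Vb_def using sp(1) by (intro grad_transform) auto
  have tt: "transpose Ai ** transpose A = mat 1"
    by (simp add: matrix_transpose_mul[symmetric] AAi)
  have Fb: "Fvec pb Vb x = Ai *v Fvec p V (A *v x + b)" for x
  proof -
    have "Fvec pb Vb x = (Ai ** cov p ** transpose Ai) *v (transpose A *v grad V (A *v x + b))"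
      by (simp only: Fvec_def cb gb)
    also have "\<dots> = Ai *v (cov p *v ((transpose Ai ** transpose A) *v grad V (A *v x + b)))"
      by (simp only: matrix_vector_mul_assoc matrix_mul_assoc)
    also have "\<dots> = Ai *v Fvec p V (A *v x + b)"
      by (simp only: tt Fvec_def matrix_vector_mul_lid)
    finally show ?thesis .
  qed
  have part2: "\<forall>x. Fvec p V (A *v x + b) = A *v Fvec pb Vb x"
    by (simp add: Fb matrix_vector_mul_assoc AAi)
  define G where "G y = p y *\<^sub>R Fvec p V y" for y
  have Gb: "(\<lambda>x. pb x *\<^sub>R Fvec pb Vb x) = (\<lambda>x. \<bar>det A\<bar> *\<^sub>R (Ai *v G (A *v x + b)))"
    by (rule ext) (simp add: Fb G_def pb_def matrix_vector_mult_scaleR)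
  have Eb: "expect pb (\<lambda>x. Psi_data (A *v x + b)) = expect p Psi_data"
    unfolding expect_def by (rule cvE[OF inv iP, where b=b]) (simp add: pb_def)
  have dGb: "\<forall>x. (\<lambda>x. pb x *\<^sub>R Fvec pb Vb x) differentiable (at x)"
    unfolding Gb using sp(2) by (intro allI div_transform(1)[OF _ AAi]) (simp add: G_def)
  have divb: "divergence (\<lambda>x. pb x *\<^sub>R Fvec pb Vb x) x
      = - (Psi_data (A *v x + b) - expect pb (\<lambda>x. Psi_data (A *v x + b))) * pb x" for x
  proof -
    have "divergence (\<lambda>x. pb x *\<^sub>R Fvec pb Vb x) x = \<bar>det A\<bar> * divergence G (A *v x + b)"
      unfolding Gb using sp(2) by (intro div_transform(2)[OF _ AAi]) (simp add: G_def)
    also have "\<dots> = \<bar>det A\<bar> * (- (Psi_data (A *v x + b) - expect p Psi_data) * p (A *v x + b))"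
      using sp(3) by (simp add: G_def[abs_def])
    finally show ?thesis by (simp add: Eb pb_def)
  qed
  have dVb: "\<forall>x. Vb differentiable (at x)"
    unfolding Vb_def using sp(1) by (auto intro: diff_affine)
  have part1: "solves_pde (\<lambda>x. Psi_data (A *v x + b)) pb Vb"
    unfolding solves_pde_def using dVb dGb divb by blast
  have pbe: "pb = (\<lambda>x. post Psi_data Psi_prior \<tau> (A *v x + b) * \<bar>det A\<bar>)"
    by (simp add: pb_def[abs_def] p_def)
  have Vbe: "Vb = (\<lambda>x. V (A *v x + b))" by (simp add: Vb_def[abs_def])
  show ?thesis using part1 part2 unfolding pbe Vbe p_def by blast
qed

end
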